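(* Let $m\ge 0$ and $Z\ge 1$ be integers and let $\gamma,\kappa\ge 2$ be integers with $\gamma\kappa>\gamma+\kappa$. Consider pairs $(\mathbf P,\mathbf L)$ with $\mathbf P\in\{0,\ldots,m\}^{\gamma\times\kappa}$ and $\mathbf L\in\mathbb{Z}_Z^{\gamma\times\kappa}$. For $1\le i_1<i_2\le\gamma$ and $1\le j_1<j_2\le\kappa$, call $(i_1,i_2,j_1,j_2)$ active under $(\mathbf P,\mathbf L)$ if $\mathbf P(i_1,j_1)+\mathbf P(i_2,j_2)=\mathbf P(i_1,j_2)+\mathbf P(i_2,j_1)$ and $\mathbf L(i_1,j_1)+\mathbf L(i_2,j_2)\equiv\mathbf L(i_1,j_2)+\mathbf L(i_2,j_1)\pmod Z$. Call two pairs $(\mathbf P,\mathbf L)$, $(\mathbf P',\mathbf L')$ equivalent if there exist a permutation $\pi_r$ of $[\gamma]$ and a permutation $\pi_c$ of $[\kappa]$ such that $\mathbf P'(\pi_r(i),\pi_c(j))=\mathbf P(i,j)$ and $\mathbf L'(\pi_r(i),\pi_c(j))=\mathbf L(i,j)$ for all $i,j$. Let $N_N$ be the number of equivalence classes of pairs under which no 4-cycle candidate is active. Let $\Delta=(2\gamma-3)(2\kappa-3)$, $I=\frac{(\Delta-1)^{\Delta-1}}{\Delta^{\Delta}}$, $II=\frac{27}{256(\gamma\kappa-\gamma-\kappa)}$. If $\frac{2m^2+4m+3}{3(m+1)^3Z}\le\max\{I,II\}$, then $$N_N\ \ge\ \begin{cases}\dfrac{[Z(m+1)]^{\gamma\kappa}\left(1-\frac{2}{\Delta}\right)^{\binom{\gamma}{2}\binom{\kappa}{2}}}{\gamma!\,\kappa!},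 & \text{if } I>II,\\[8pt] \dfrac{[Z(m+1)]^{\gamma\kappa}\left(1-\frac{\gamma\kappa-\gamma-\kappa+1}{4(\gamma\kappa-\gamma-\kappa)}\right)^{\gamma\kappa}}{\gamma!\,\kappa!}, & \text{otherwise.}\end{cases}$$
   Context: Setting: uniform edge spreading (partition matrix $\mathbf P$, memory $m$) and uniform $Z$-lifting (lifting matrix $\mathbf L$) of the all-ones $\gamma\times\kappa$ base matrix; the activation conditions are those for a base-graph 4-cycle to survive spreading and lifting. *)

theory Defs
  imports "HOL-Analysis.Analysis" "HOL-Combinatorics.Permutations"
begin

text \<open>Matrices are functions nat => nat => nat, indices 0-based (row i < gamma, column j < kappa),
  made extensional (value 0 outside the index range) so that the set of pairs is finite.
  Entries of L represent elements of Z_Z by their residues 0..Z-1.\<close>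

definition pairs :: "nat \<Rightarrow> nat \<Rightarrow> nat \<Rightarrow> nat \<Rightarrow>
    ((nat \<Rightarrow> nat \<Rightarrow> nat) \<times> (nat \<Rightarrow> nat \<Rightarrow> nat)) set" where
  "pairs g k m Z = {(P, L). \<forall>i j.
      (i < g \<and> j < k \<longrightarrow> P i j \<le> m \<and> L i j < Z) \<and>
      (\<not> (i < g \<and> j < k) \<longrightarrow> P i j = 0 \<and> L i j = 0)}"

definition active :: "nat \<Rightarrow> (nat \<Rightarrow> nat \<Rightarrow> nat) \<Rightarrow> (nat \<Rightarrow> nat \<Rightarrow> nat) \<Rightarrow>
    nat \<Rightarrow> nat \<Rightarrow> nat \<Rightarrow> nat \<Rightarrow> bool" where
  "active Z P L i1 i2 j1 j2 \<longleftrightarrow>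
     P i1 j1 + P i2 j2 = P i1 j2 + P i2 j1 \<and>
     (L i1 j1 + L i2 j2) mod Z = (L i1 j2 + L i2 j1) mod Z"

definition no_active_pairs :: "nat \<Rightarrow> nat \<Rightarrow> nat \<Rightarrow> nat \<Rightarrow>
    ((nat \<Rightarrow> nat \<Rightarrow> nat) \<times> (nat \<Rightarrow> nat \<Rightarrow> nat)) set" where
  "no_active_pairs g k m Z = {(P, L) \<in> pairs g k m Z.
      \<forall>i1 i2 j1 j2. i1 < i2 \<and> i2 < g \<and> j1 < j2 \<and> j2 < k \<longrightarrow>
        \<not> active Z P L i1 i2 j1 j2}"

definition pair_equiv :: "nat \<Rightarrow> nat \<Rightarrow> nat \<Rightarrow> nat \<Rightarrow>
    (((nat \<Rightarrow> nat \<Rightarrow> nat) \<times> (nat \<Rightarrow> nat \<Rightarrow> nat)) \<times>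
     ((nat \<Rightarrow> nat \<Rightarrow> nat) \<times> (nat \<Rightarrow> nat \<Rightarrow> nat))) set" where
  "pair_equiv g k m Z = {((P, L), (P', L')).
      (P, L) \<in> pairs g k m Z \<and> (P', L') \<in> pairs g k m Z \<and>
      (\<exists>pr pc. pr permutes {..<g} \<and> pc permutes {..<k} \<and>
         (\<forall>i<g. \<forall>j<k. P' (pr i) (pc j) = P i j \<and> L' (pr i) (pc j) = L i j))}"

definition N_N :: "nat \<Rightarrow> nat \<Rightarrow> nat \<Rightarrow> nat \<Rightarrow> nat" where
  "N_N g k m Z = card (no_active_pairs g k m Z // pair_equiv g k m Z)"

end

theory Submission
  imports Defs
begin


definition filled :: "nat \<Rightarrow> nat \<Rightarrow> nat \<Rightarrow> nat \<Rightarrow> nat \<Rightarrow> bool" where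
  "filled g k n i j \<longleftrightarrow> i < g \<and> j < k \<and> i * k + j < n"

definition S :: "nat \<Rightarrow> nat \<Rightarrow> nat \<Rightarrow> nat \<Rightarrow> nat \<Rightarrow>
    ((nat \<Rightarrow> nat \<Rightarrow> nat) \<times> (nat \<Rightarrow> nat \<Rightarrow> nat)) set" where
  "S g k m Z n = {(P, L). (\<forall>i j. (filled g k n i j \<longrightarrow> P i j \<le> m \<and> L i j < Z) \<and>
      (\<not> filled g k n i j \<longrightarrow> P i j = 0 \<and> L i j = 0)) \<and>
      (\<forall>i1 i2 j1 j2. i1 < i2 \<and> j1 < j2 \<and> filled g k n i2 j2 \<longrightarrow> \<not> active Z P L i1 i2 j1 j2)}"

lemma finite_pairs: "finite (pairs g k m Z)"
proof -
  define B where "B = {f::nat\<Rightarrow>nat. \<forall>j. (j \<in> {..<k} \<longrightarrow> f j \<in> {..max m Z}) \<and> (j \<notin> {..<k} \<longrightarrow> f j = 0)}"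
  have fB: "finite B" unfolding B_def by (rule finite_set_of_finite_funs) auto
  define C where "C = {P::nat\<Rightarrow>nat\<Rightarrow>nat. \<forall>i. (i \<in> {..<g} \<longrightarrow> P i \<in> B) \<and> (i \<notin> {..<g} \<longrightarrow> P i = (\<lambda>_. 0))}"
  have fC: "finite C" unfolding C_def by (rule finite_set_of_finite_funs) (auto simp: fB)
  have sub: "pairs g k m Z \<subseteq> C \<times> C"
  proof
    fix x assume "x \<in> pairs g k m Z"
    then obtain P L where x: "x = (P, L)" and h: "\<forall>i j. (i < g \<and> j < k \<longrightarrow> P i j \<le> m \<and> L i j < Z) \<and>
            (\<not> (i < g \<and> j < k) \<longrightarrow> P i j = 0 \<and> L i j = 0)"
      unfolding pairs_def by auto
    have "P \<in> C" unfolding C_def B_def using h by (auto simp: fun_eq_iff le_max_iff_disj)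
    have h2: "\<forall>i j. i < g \<and> j < k \<longrightarrow> L i j \<le> max m Z" using h by (metis le_max_iff_disj less_imp_le)
    have "L \<in> C" unfolding C_def B_def using h h2 by (auto simp: fun_eq_iff)
    then show "x \<in> C \<times> C" using x \<open>P \<in> C\<close> by simp
  qed
  show ?thesis by (rule finite_subset[OF sub finite_cartesian_product[OF fC fC]])
qed

lemma S_sub: "Z \<ge> 1 \<Longrightarrow> S g k m Z n \<subseteq> pairs g k m Z"
  unfolding S_def pairs_def filled_def by fastforce

lemma finite_S: "Z \<ge> 1 \<Longrightarrow> finite (S g k m Z n)"
  by (rule finite_subset[OF S_sub finite_pairs])

lemma idx_lt: "i < g \<Longrightarrow> j < (k::nat) \<Longrightarrow> i * k + j < g * k"
proof -
  assume a: "i < g" "j < k"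
  have "(i+1) * k \<le> g * k" using a(1) by (intro mult_le_mono1) simp
  then show ?thesis using a(2) by simp
qed

lemma S_full: "S g k m Z (g*k) \<subseteq> no_active_pairs g k m Z"
  unfolding S_def no_active_pairs_def pairs_def filled_def
  using idx_lt by fastforce

lemma S_0: "S g k m Z 0 = {(\<lambda>_ _. 0, \<lambda>_ _. 0)}"
  unfolding S_def filled_def by (auto simp: fun_eq_iff)

lemma idx_eq: "b < (k::nat) \<Longrightarrow> (a * k + b = n) \<longleftrightarrow> (a = n div k \<and> b = n mod k)"
  by auto

lemma filled_Suc:
  assumes "n < g * k"
  shows "filled g k (Suc n) a b \<longleftrightarrow> filled g k n a b \<or> (a = n div k \<and> b = n mod k)"
proof -
  have k: "k > 0" using assms by (cases k) auto
  have "n div k < g" using assms k by (simp add: div_less_iff_less_mult)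
  moreover have "n mod k < k" using k by simp
  ultimately show ?thesis unfolding filled_def using idx_eq[of b k a n]
    by (metis div_mult_mod_eq less_Suc_eq mult.commute)
qed

lemma modc_aux: "((c::nat) + b) mod Z = (c + b') mod Z \<Longrightarrow> b' < Z \<Longrightarrow> b \<le> b' \<Longrightarrow> b = b'"
proof -
  assume a: "(c + b) mod Z = (c + b') mod Z" "b' < Z" "b \<le> b'"
  have "Z dvd (c+b') - (c+b)" using mod_eq_dvd_iff_nat[of "c+b" "c+b'" Z] a by simp
  then have "Z dvd b' - b" by simp
  moreover have "b' - b < Z" using a by simp
  ultimately have "b' - b = 0" by (metis dvd_imp_le neq0_conv not_le)
  then show ?thesis using a by simp
qed

lemma modc: "((c::nat) + b) mod Z = (c + b') mod Z \<Longrightarrow> b < Z \<Longrightarrow> b' < Z \<Longrightarrow> b = b'"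
  by (metis modc_aux nat_le_linear)

lemma step:
  assumes n: "n < g * k" and Z: "Z \<ge> 1"
  shows "card (S g k m Z n) * (Z * (m + 1) - (n div k) * (n mod k)) \<le> card (S g k m Z (Suc n))"
proof -
  define i where "i = n div k"
  define j where "j = n mod k"
  have k: "k > 0" using n by (cases k) auto
  have ig: "i < g" using n k by (simp add: i_def div_less_iff_less_mult)
  have jk: "j < k" using k by (simp add: j_def)
  have ijn: "i * k + j = n" by (simp add: i_def j_def)
  have nfij: "\<not> filled g k n i j" using ijn unfolding filled_def by simp
  have fS: "\<And>n'. filled g k (Suc n) n' = (\<lambda>b. filled g k n n' b \<or> (n' = i \<and> b = j))"
    using filled_Suc[OF n] by (auto simp: i_def j_def fun_eq_iff)
  define R where "R = {..m} \<times> {..<Z}"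
  have fR: "finite R" unfolding R_def by simp
  have cR: "card R = Z * (m + 1)" unfolding R_def by simp
  define allowed where "allowed = (\<lambda>x::(nat\<Rightarrow>nat\<Rightarrow>nat)\<times>(nat\<Rightarrow>nat\<Rightarrow>nat). {(a,b) \<in> R. \<forall>i1<i. \<forall>j1<j.
      \<not> (fst x i1 j1 + a = fst x i1 j + fst x i j1 \<and> (snd x i1 j1 + b) mod Z = (snd x i1 j + snd x i j1) mod Z)})"
  define ext where "ext = (\<lambda>(x::(nat\<Rightarrow>nat\<Rightarrow>nat)\<times>(nat\<Rightarrow>nat\<Rightarrow>nat), v::nat\<times>nat).
      ((\<lambda>a b. if a = i \<and> b = j then fst v else fst x a b), (\<lambda>a b. if a = i \<and> b = j then snd v else snd x a b)))"
  have card_allowed: "Z * (m + 1) - i * j \<le> card (allowed x)" for x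
  proof -
    define bad where "bad = (\<lambda>(i1,j1). {(a,b) \<in> R. fst x i1 j1 + a = fst x i1 j + fst x i j1 \<and>
        (snd x i1 j1 + b) mod Z = (snd x i1 j + snd x i j1) mod Z})"
    have al: "allowed x = R - (\<Union> (bad ` ({..<i} \<times> {..<j})))" unfolding allowed_def bad_def by auto
    have cb: "card (bad c) \<le> 1" for c
    proof -
      obtain i1 j1 where c: "c = (i1,j1)" by force
      have "finite (bad c)" unfolding bad_def c by (rule finite_subset[OF _ fR]) auto
      moreover have "\<forall>u\<in>bad c. \<forall>v\<in>bad c. u = v"
      proof (intro ballI)
        fix u v assume u: "u \<in> bad c" and v: "v \<in> bad c"
        obtain a1 b1 where u': "u = (a1, b1)" by force
        obtain a2 b2 where v': "v = (a2, b2)" by force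
        have hu: "fst x i1 j1 + a1 = fst x i1 j + fst x i j1" "(snd x i1 j1 + b1) mod Z = (snd x i1 j + snd x i j1) mod Z" "b1 < Z"
          using u unfolding u' bad_def c R_def by auto
        have hv: "fst x i1 j1 + a2 = fst x i1 j + fst x i j1" "(snd x i1 j1 + b2) mod Z = (snd x i1 j + snd x i j1) mod Z" "b2 < Z"
          using v unfolding v' bad_def c R_def by auto
        have "a1 = a2" using hu(1) hv(1) by simp
        moreover have "b1 = b2" by (rule modc[of "snd x i1 j1"]) (use hu hv in simp_all)
        ultimately show "u = v" unfolding u' v' by simp
      qed
      ultimately have "card (bad c) \<le> Suc 0" using card_le_Suc0_iff_eq by blast
      then show ?thesis by simp
    qed
    have "card (\<Union> (bad ` ({..<i} \<times> {..<j}))) \<le> (\<Sum>c\<in>{..<i} \<times> {..<j}. card (bad c))"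
      by (rule card_UN_le) simp
    also have "\<dots> \<le> (\<Sum>c\<in>{..<i} \<times> {..<j}. 1)" by (rule sum_mono) (rule cb)
    also have "\<dots> = i * j" by simp
    finally have cu: "card (\<Union> (bad ` ({..<i} \<times> {..<j}))) \<le> i * j" .
    have fu: "finite (\<Union> (bad ` ({..<i} \<times> {..<j})))" unfolding bad_def by (rule finite_subset[OF _ fR]) auto
    have "card R - card (\<Union> (bad ` ({..<i} \<times> {..<j}))) \<le> card (allowed x)"
      unfolding al by (rule diff_card_le_card_Diff[OF fu])
    then show ?thesis using cu cR by linarith
  qed
  have img: "ext ` Sigma (S g k m Z n) allowed \<subseteq> S g k m Z (Suc n)"
  proof
    fix y assume "y \<in> ext ` Sigma (S g k m Z n) allowed"
    then obtain P L a b where xS: "(P, L) \<in> S g k m Z n" and vA: "(a, b) \<in> allowed (P, L)"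
      and y: "y = ext ((P, L), (a, b))" by auto
    from xS have hP: "\<forall>i j. (filled g k n i j \<longrightarrow> P i j \<le> m \<and> L i j < Z) \<and>
      (\<not> filled g k n i j \<longrightarrow> P i j = 0 \<and> L i j = 0)"
      and hA: "\<forall>i1 i2 j1 j2. i1 < i2 \<and> j1 < j2 \<and> filled g k n i2 j2 \<longrightarrow> \<not> active Z P L i1 i2 j1 j2"
      unfolding S_def by auto
    from vA have am: "a \<le> m" and bZ: "b < Z" and hv: "\<forall>i1<i. \<forall>j1<j.
      \<not> (P i1 j1 + a = P i1 j + P i j1 \<and> (L i1 j1 + b) mod Z = (L i1 j + L i j1) mod Z)"
      unfolding allowed_def R_def by auto
    define P' where "P' = (\<lambda>a' b'. if a' = i \<and> b' = j then a else P a' b')"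
    define L' where "L' = (\<lambda>a' b'. if a' = i \<and> b' = j then b else L a' b')"
    have y': "y = (P', L')" unfolding y ext_def P'_def L'_def prod.case fst_conv snd_conv by (rule refl)
    have part1: "\<forall>i' j'. (filled g k (Suc n) i' j' \<longrightarrow> P' i' j' \<le> m \<and> L' i' j' < Z) \<and>
      (\<not> filled g k (Suc n) i' j' \<longrightarrow> P' i' j' = 0 \<and> L' i' j' = 0)"
      unfolding P'_def L'_def fS using hP am bZ nfij by auto
    have part2: "\<not> active Z P' L' i1 i2 j1 j2"
      if h: "i1 < i2" "j1 < j2" "filled g k (Suc n) i2 j2" for i1 i2 j1 j2
    proof (cases "filled g k n i2 j2")
      case True
      then have lt: "i2 * k + j2 < n" unfolding filled_def by simp
      have "i1 * k < i2 * k" using h(1) k by simp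
      then have l1: "i1 * k + j2 < n" "i1 * k + j1 < n" using lt h(2) by linarith+
      have l2: "i2 * k + j1 < n" using lt h(2) by linarith
      have ne: "\<And>i' j'. i' * k + j' < n \<Longrightarrow> \<not> (i' = i \<and> j' = j)" using ijn by auto
      have c1: "P' i1 j1 = P i1 j1" "L' i1 j1 = L i1 j1" unfolding P'_def L'_def using ne[OF l1(2)] by (simp_all only: if_False if_not_P)
      have c2: "P' i1 j2 = P i1 j2" "L' i1 j2 = L i1 j2" unfolding P'_def L'_def using ne[OF l1(1)] by (simp_all only: if_False if_not_P)
      have c3: "P' i2 j1 = P i2 j1" "L' i2 j1 = L i2 j1" unfolding P'_def L'_def using ne[OF l2] by (simp_all only: if_False if_not_P)
      have c4: "P' i2 j2 = P i2 j2" "L' i2 j2 = L i2 j2" unfolding P'_def L'_def using ne[OF lt] by (simp_all only: if_False if_not_P)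
      have "active Z P' L' i1 i2 j1 j2 = active Z P L i1 i2 j1 j2"
        unfolding active_def c1 c2 c3 c4 by (rule refl)
      moreover have "\<not> active Z P L i1 i2 j1 j2"
        using spec[OF spec[OF spec[OF spec[OF hA, of i1], of i2], of j1], of j2] h True by simp
      ultimately show ?thesis by simp
    next
      case False
      then have e: "i2 = i" "j2 = j" using h(3) fS by auto
      then have "i1 < i" "j1 < j" using h by auto
      then show ?thesis unfolding active_def P'_def L'_def e using hv by auto
    qed
    have p2: "\<forall>i1 i2 j1 j2. i1 < i2 \<and> j1 < j2 \<and> filled g k (Suc n) i2 j2 \<longrightarrow> \<not> active Z P' L' i1 i2 j1 j2"
      using part2 by blast
    show "y \<in> S g k m Z (Suc n)" unfolding y' S_def
      by (simp only: mem_Collect_eq prod.case) (rule conjI[OF part1 p2])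
  qed
  have inj: "inj_on ext (Sigma (S g k m Z n) allowed)"
  proof (rule inj_onI)
    fix u w assume u: "u \<in> Sigma (S g k m Z n) allowed" and w: "w \<in> Sigma (S g k m Z n) allowed"
      and e: "ext u = ext w"
    obtain P1 L1 a1 b1 where u': "u = ((P1, L1), (a1, b1))" by (metis prod.collapse)
    obtain P2 L2 a2 b2 where w': "w = ((P2, L2), (a2, b2))" by (metis prod.collapse)
    have z1: "P1 i j = 0" "L1 i j = 0" using u nfij unfolding u' S_def by auto
    have z2: "P2 i j = 0" "L2 i j = 0" using w nfij unfolding w' S_def by auto
    have e1: "\<And>a' b'. (if a' = i \<and> b' = j then a1 else P1 a' b') = (if a' = i \<and> b' = j then a2 else P2 a' b')"
      using e unfolding u' w' ext_def prod.case fst_conv snd_conv by (simp add: fun_eq_iff)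
    have e2: "\<And>a' b'. (if a' = i \<and> b' = j then b1 else L1 a' b') = (if a' = i \<and> b' = j then b2 else L2 a' b')"
      using e unfolding u' w' ext_def prod.case fst_conv snd_conv by (simp add: fun_eq_iff)
    have "a1 = a2" using e1[of i j] by simp
    moreover have "b1 = b2" using e2[of i j] by simp
    moreover have "P1 = P2"
    proof (intro ext)
      fix a' b' show "P1 a' b' = P2 a' b'" using e1[of a' b'] z1 z2 by (cases "a' = i \<and> b' = j") auto
    qed
    moreover have "L1 = L2"
    proof (intro ext)
      fix a' b' show "L1 a' b' = L2 a' b'" using e2[of a' b'] z1 z2 by (cases "a' = i \<and> b' = j") auto
    qed
    ultimately show "u = w" unfolding u' w' by simp
  qed
  have fA: "finite (allowed x)" for x unfolding allowed_def by (rule finite_subset[OF _ fR]) auto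
  have "card (S g k m Z n) * (Z * (m + 1) - i * j) \<le> (\<Sum>x\<in>S g k m Z n. card (allowed x))"
    using sum_bounded_below[of "S g k m Z n" "Z * (m + 1) - i * j" "\<lambda>x. card (allowed x)"] card_allowed
    by simp
  also have "\<dots> = card (Sigma (S g k m Z n) allowed)"
    by (rule card_SigmaI[symmetric]) (use finite_S[OF Z] fA in auto)
  also have "\<dots> = card (ext ` Sigma (S g k m Z n) allowed)" by (rule card_image[symmetric, OF inj])
  also have "\<dots> \<le> card (S g k m Z (Suc n))" by (rule card_mono[OF finite_S[OF Z] img])
  finally show ?thesis unfolding i_def j_def .
qed



lemma S_prod:
  assumes Z: "Z \<ge> 1"
  shows "n \<le> g * k \<Longrightarrow> (\<Prod>n'<n. (Z * (m + 1) - (n' div k) * (n' mod k))) \<le> card (S g k m Z n)"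
proof (induction n)
  case 0
  then show ?case by (simp add: S_0)
next
  case (Suc n)
  then have "(\<Prod>n'<n. (Z * (m + 1) - (n' div k) * (n' mod k))) \<le> card (S g k m Z n)" by simp
  then have "(\<Prod>n'<Suc n. (Z * (m + 1) - (n' div k) * (n' mod k)))
     \<le> card (S g k m Z n) * (Z * (m + 1) - (n div k) * (n mod k))" by (simp add: mult_le_mono1)
  also have "\<dots> \<le> card (S g k m Z (Suc n))" using step[of n g k Z m] Suc.prems Z by simp
  finally show ?case .
qed

lemma card_na:
  assumes Z: "Z \<ge> 1"
  shows "(\<Prod>n'<g*k. (Z * (m + 1) - (n' div k) * (n' mod k))) \<le> card (no_active_pairs g k m Z)"
proof -
  have f: "finite (no_active_pairs g k m Z)"
    by (rule finite_subset[OF _ finite_pairs]) (auto simp: no_active_pairs_def)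
  show ?thesis using S_prod[OF Z, of "g*k" g k m] card_mono[OF f S_full] by linarith
qed

lemma class_card:
  assumes x: "x \<in> pairs g k m Z"
  shows "card (pair_equiv g k m Z `` {x}) \<le> fact g * fact k"
proof -
  obtain P L where xPL: "x = (P, L)" by force
  define F where "F = (\<lambda>(pr::nat\<Rightarrow>nat, pc::nat\<Rightarrow>nat).
     ((\<lambda>a b. if a < g \<and> b < k then P (inv pr a) (inv pc b) else 0),
      (\<lambda>a b. if a < g \<and> b < k then L (inv pr a) (inv pc b) else 0)))"
  define PP where "PP = {pr. pr permutes {..<g}} \<times> {pc. pc permutes {..<k}}"
  have sub: "pair_equiv g k m Z `` {x} \<subseteq> F ` PP"
  proof
    fix y assume "y \<in> pair_equiv g k m Z `` {x}"
    then obtain P' L' where y: "y = (P', L')" and yp: "(P', L') \<in> pairs g k m Z"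
      and ex: "\<exists>pr pc. pr permutes {..<g} \<and> pc permutes {..<k} \<and>
         (\<forall>i<g. \<forall>j<k. P' (pr i) (pc j) = P i j \<and> L' (pr i) (pc j) = L i j)"
      unfolding pair_equiv_def xPL by auto
    then obtain pr pc where pr: "pr permutes {..<g}" and pc: "pc permutes {..<k}"
      and h: "\<forall>i<g. \<forall>j<k. P' (pr i) (pc j) = P i j \<and> L' (pr i) (pc j) = L i j" by blast
    have z: "\<not> (a < g \<and> b < k) \<Longrightarrow> P' a b = 0 \<and> L' a b = 0" for a b
      using yp unfolding pairs_def by auto
    have inr: "a < g \<Longrightarrow> inv pr a < g \<and> pr (inv pr a) = a" for a
      using permutes_inv[OF pr] permutes_in_image permutes_inverses(1)[OF pr] by fastforce
    have inc: "b < k \<Longrightarrow> inv pc b < k \<and> pc (inv pc b) = b" for b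
      using permutes_inv[OF pc] permutes_in_image permutes_inverses(1)[OF pc] by fastforce
    have "y = F (pr, pc)"
      unfolding y F_def
      using h z inr inc by (auto simp: fun_eq_iff) (metis)+
    moreover have "(pr, pc) \<in> PP" unfolding PP_def using pr pc by simp
    ultimately show "y \<in> F ` PP" by blast
  qed
  have fPP: "finite PP" unfolding PP_def by (simp add: finite_permutations)
  have cPP: "card PP = fact g * fact k" unfolding PP_def
    by (simp add: card_cartesian_product card_permutations)
  have "card (pair_equiv g k m Z `` {x}) \<le> card (F ` PP)" by (rule card_mono[OF finite_imageI[OF fPP] sub])
  also have "\<dots> \<le> card PP" by (rule card_image_le[OF fPP])
  finally show ?thesis using cPP by simp
qed

lemma quot_bound: "card (no_active_pairs g k m Z) \<le> N_N g k m Z * (fact g * fact k)"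
proof -
  define A where "A = no_active_pairs g k m Z"
  define R where "R = pair_equiv g k m Z"
  have Ap: "A \<subseteq> pairs g k m Z" unfolding A_def no_active_pairs_def by auto
  have Rp: "R `` {x} \<subseteq> pairs g k m Z" for x unfolding R_def pair_equiv_def by auto
  have refl: "x \<in> R `` {x}" if "x \<in> A" for x
  proof -
    obtain P L where xPL: "x = (P, L)" by force
    have "(x, x) \<in> R" unfolding R_def pair_equiv_def xPL
      using that Ap xPL by (auto intro!: exI[of _ id] permutes_id)
    then show ?thesis by simp
  qed
  have sub: "A \<subseteq> \<Union> (A // R)" using refl unfolding quotient_def by blast
  have fU: "finite (\<Union> (A // R))"
    by (rule finite_subset[OF _ finite_pairs[of g k m Z]]) (use Rp in \<open>auto simp: quotient_def\<close>)
  have "card A \<le> card (\<Union> (A // R))" by (rule card_mono[OF fU sub])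
  also have "\<dots> \<le> sum card (A // R)" by (rule card_Union_le_sum_card)
  also have "\<dots> \<le> card (A // R) * (fact g * fact k)"
  proof -
    have "card C \<le> fact g * fact k" if "C \<in> A // R" for C
    proof -
      from that obtain x where "x \<in> A" "C = R `` {x}" by (auto elim: quotientE)
      then show ?thesis using class_card Ap unfolding R_def by blast
    qed
    then show ?thesis using sum_bounded_above[of "A // R" card "fact g * fact k"] by simp
  qed
  finally show ?thesis unfolding N_N_def A_def R_def .
qed

lemma bij_dm: assumes k: "k > 0" shows "bij_betw (\<lambda>n. (n div k, n mod k)) {..<g*k} ({..<g} \<times> {..<(k::nat)})"
  apply (rule bij_betw_byWitness[where f' = "\<lambda>(i, j). i * k + j"])
  using k idx_lt by (auto simp: div_less_iff_less_mult)

lemma sum_gauss2: "(\<Sum>i<g. i) = g choose 2"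
proof (induction g)
  case 0 then show ?case by simp
next
  case (Suc g)
  have "(Suc g choose 2) = (g choose 1) + (g choose 2)" by (simp add: numeral_2_eq_2)
  then show ?case using Suc by simp
qed

lemma sum_t: "k > 0 \<Longrightarrow> (\<Sum>n<g*k. (n div k) * (n mod k)) = (g choose 2) * (k choose 2)"
proof -
  assume k: "k > 0"
  have "(\<Sum>n<g*k. (n div k) * (n mod k)) = (\<Sum>(i, j)\<in>{..<g} \<times> {..<k}. i * j)"
    using sum.reindex_bij_betw[OF bij_dm[OF k, of g], of "\<lambda>(i, j). i * j"] by simp
  also have "\<dots> = (\<Sum>i<g. i) * (\<Sum>j<k. j)"
    by (simp add: sum.cartesian_product[symmetric] sum_product)
  finally show ?thesis by (simp add: sum_gauss2)
qed



lemma fac1: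
  fixes D N :: real and t :: nat
  assumes D: "D \<ge> 3" and tN: "real t + D / 2 \<le> N"
  shows "N * (1 - 2 / D) ^ t \<le> N - real t"
proof -
  define y where "y = 2 / D"
  have y0: "0 < y" and y1: "y \<le> 1" using D by (auto simp: y_def field_simps)
  have h1: "1 + real t * y \<le> (1 + y) ^ t" by (rule Bernoulli_inequality) (use y0 in simp)
  have "(1 - y) ^ t * (1 + y) ^ t = (1 - y^2) ^ t" by (simp add: power_mult_distrib[symmetric] power2_eq_square algebra_simps)
  also have "\<dots> \<le> 1" by (rule power_le_one) (use y0 y1 in \<open>auto simp: power2_eq_square mult_le_one\<close>)
  finally have h2: "(1 - y) ^ t * (1 + y) ^ t \<le> 1" .
  have q0: "0 \<le> (1 - y) ^ t" using y1 by simp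
  have h3: "(1 - y) ^ t * (1 + real t * y) \<le> 1"
    using mult_left_mono[OF h1 q0] h2 by linarith
  have "y * (N - real t) \<ge> 1"
  proof -
    have "y * (N - real t) \<ge> y * (D / 2)" using tN y0 by (intro mult_left_mono) auto
    also have "y * (D / 2) = 1" using D by (simp add: y_def)
    finally show ?thesis .
  qed
  then have "real t * (y * (N - real t) - 1) \<ge> 0" by simp
  then have h4: "N \<le> (N - real t) * (1 + real t * y)" by (simp add: algebra_simps)
  have N0: "0 \<le> N" using tN D by simp
  have "N * (1 - y) ^ t \<le> (N - real t) * (1 + real t * y) * (1 - y) ^ t"
    by (rule mult_right_mono[OF h4 q0])
  also have "\<dots> = (N - real t) * ((1 - y) ^ t * (1 + real t * y))" by simp
  also have "\<dots> \<le> (N - real t) * 1" by (rule mult_left_mono[OF h3]) (use tN D in simp)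
  finally show ?thesis by (simp add: y_def)
qed

lemma frac_aux: "(x::real) > 0 \<Longrightarrow> z > 0 \<Longrightarrow> 2 / (3 * (z * x)) = (2 * x^2) / (3 * x^3 * z)"
  by (simp add: field_simps power2_eq_square power3_eq_cube)

lemma I_bound:
  assumes D: "D \<ge> (2::nat)"
  shows "(real D - 1) ^ (D - 1) / real D ^ D \<le> 1 / (2 * real D)"
proof -
  define n where "n = D - 1"
  define e where "e = real D - 1"
  have en: "e = real n" unfolding e_def n_def using D by (simp add: of_nat_diff)
  have e1: "e \<ge> 1" using D unfolding e_def by simp
  have Dn: "D = Suc n" unfolding n_def using D by simp
  have "1 + real n * (1 / e) \<le> (1 + 1 / e) ^ n"
  proof (rule Bernoulli_inequality)
    have "0 \<le> 1 / e" using e1 by simp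
    then show "- 1 \<le> 1 / e" by linarith
  qed
  then have b: "2 \<le> (1 + 1 / e) ^ n" using e1 en by simp
  have "e ^ n * (1 + 1 / e) ^ n = (e + 1) ^ n" using e1 by (simp add: power_mult_distrib[symmetric] field_simps)
  also have "e + 1 = real D" unfolding e_def by simp
  finally have c: "e ^ n * (1 + 1 / e) ^ n = real D ^ n" .
  have "2 * e ^ n \<le> real D ^ n" using mult_left_mono[OF b, of "e ^ n"] c e1 by (simp add: mult.commute)
  then have en2: "e ^ n \<le> real D ^ n / 2" by simp
  have "e ^ n / real D ^ D = e ^ n / (real D * real D ^ n)" using Dn by simp
  also have "\<dots> \<le> (real D ^ n / 2) / (real D * real D ^ n)"
    by (rule divide_right_mono[OF en2]) simp
  also have "\<dots> = 1 / (2 * real D)" using D by (simp add: field_simps)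
  finally show ?thesis unfolding e_def n_def .
qed

theorem corollary2:
  fixes m Z g k :: nat
  assumes "Z \<ge> 1" and "g \<ge> 2" and "k \<ge> 2" and "g * k > g + k"
  defines "D \<equiv> (2 * g - 3) * (2 * k - 3)"
  defines "I \<equiv> (real D - 1) ^ (D - 1) / real D ^ D"
  defines "II \<equiv> 27 / (256 * (real g * real k - real g - real k))"
  assumes "(2 * real m ^ 2 + 4 * real m + 3) / (3 * (real m + 1) ^ 3 * real Z) \<le> max I II"
  shows "real (N_N g k m Z) \<ge>
    (if I > II then
       (real Z * (real m + 1)) ^ (g * k) * (1 - 2 / real D) ^ ((g choose 2) * (k choose 2))
         / (fact g * fact k)
     else
       (real Z * (real m + 1)) ^ (g * k) *
         (1 - (real g * real k - real g - real k + 1) / (4 * (real g * real k - real g - real k))) ^ (g * k)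
         / (fact g * fact k))"
proof -
  define a where "a = g - 2"
  define b where "b = k - 2"
  have ga: "g = a + 2" unfolding a_def using assms(2) by simp
  have kb: "k = b + 2" unfolding b_def using assms(3) by simp
  have ab: "a + b \<ge> 1"
  proof (rule ccontr)
    assume "\<not> a + b \<ge> 1"
    then have "a = 0" "b = 0" by auto
    then show False using assms(4) ga kb by simp
  qed
  have k0: "k > 0" using kb by simp
  have g3: "2 * g - 3 = 2 * a + 1" using ga by simp
  have k3: "2 * k - 3 = 2 * b + 1" using kb by simp
  have Dab: "D = (2 * a + 1) * (2 * b + 1)" unfolding D_def g3 k3 by (rule refl)
  define N where "N = Z * (m + 1)"
  have rN: "real N = real Z * (real m + 1)" unfolding N_def by (simp add: algebra_simps)
  have N0: "real N > 0" using assms(1) rN by (simp add: add_pos_nonneg)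
  define T where "T = (g - 1) * (k - 1)"
  define t where "t = (\<lambda>n::nat. (n div k) * (n mod k))"
  have tT: "t n \<le> T" if "n < g * k" for n
  proof -
    have "n div k < g" using that k0 by (simp add: div_less_iff_less_mult)
    then have "n div k \<le> g - 1" by simp
    moreover have "n mod k \<le> k - 1" using k0 by (simp add: less_Suc_eq_le[symmetric])
    ultimately show ?thesis unfolding t_def T_def by (rule mult_le_mono)
  qed
  have TD: "6 * T \<le> 5 * D" unfolding T_def Dab ga kb using ab by (simp add: algebra_simps)
  define p where "p = (2 * real m ^ 2 + 4 * real m + 3) / (3 * (real m + 1) ^ 3 * real Z)"
  have pN: "2 / (3 * real N) \<le> p"
  proof -
    have Zp: "real Z > 0" using assms(1) by simp
    have x0: "real m + 1 > 0" by simp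
    have eq: "2 / (3 * real N) = (2 * (real m + 1) ^ 2) / (3 * (real m + 1) ^ 3 * real Z)"
      unfolding rN by (rule frac_aux[OF x0 Zp])
    have num: "2 * (real m + 1) ^ 2 \<le> 2 * real m ^ 2 + 4 * real m + 3"
      by (simp add: power2_eq_square algebra_simps)
    have den: "0 \<le> 3 * (real m + 1) ^ 3 * real Z" by simp
    have "(2 * (real m + 1) ^ 2) / (3 * (real m + 1) ^ 3 * real Z) \<le> p" unfolding p_def
      by (rule divide_right_mono[OF num den])
    then show ?thesis using eq by simp
  qed
  have hyp: "p \<le> max I II" using assms(8) unfolding p_def .
  have c1: "real (\<Prod>n<g*k. (N - t n)) \<le> real (N_N g k m Z) * (fact g * fact k)"
  proof -
    have "(\<Prod>n<g*k. (N - t n)) \<le> card (no_active_pairs g k m Z)"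
      using card_na[OF assms(1), where g=g and k=k and m=m] unfolding N_def t_def .
    also have "\<dots> \<le> N_N g k m Z * (fact g * fact k)" by (rule quot_bound)
    finally have "(\<Prod>n<g*k. (N - t n)) \<le> N_N g k m Z * (fact g * fact k)" .
    then have "real (\<Prod>n<g*k. (N - t n)) \<le> real (N_N g k m Z * (fact g * fact k))"
      by (simp only: of_nat_le_iff)
    then show ?thesis by (simp only: of_nat_mult of_nat_fact)
  qed
  have fpos: "(fact g * fact k :: real) > 0" by simp
  have main: "X \<le> real (N_N g k m Z) * (fact g * fact k) \<Longrightarrow> X / (fact g * fact k) \<le> real (N_N g k m Z)" for X
    using fpos by (simp add: divide_le_eq)
  show ?thesis
  proof (cases "I > II")
    case True
    then have pI: "2 / (3 * real N) \<le> I" using pN hyp by simp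
    have Dex: "(2*a+1)*(2*b+1) = 4*(a*b) + 2*(a+b) + 1" by (simp add: algebra_simps)
    have ab2: "2 \<le> 2*(a+b)" using ab by simp
    have D3: "D \<ge> 3" unfolding Dab Dex using ab2 by simp
    have D2: "D \<ge> 2" "real D \<ge> 3" using D3 by auto
    have "2 / (3 * real N) \<le> 1 / (2 * real D)" using pI I_bound[OF D2(1)] unfolding I_def by linarith
    then have ND: "4 * real D \<le> 3 * real N" using N0 D2 by (simp add: field_simps)
    define q where "q = 1 - 2 / real D"
    have fac: "real N * q ^ t n \<le> real (N - t n)" if "n < g * k" for n
    proof -
      have "6 * t n \<le> 5 * D" using tT[OF that] TD by linarith
      then have "real (6 * t n) \<le> real (5 * D)" by (simp only: of_nat_le_iff)
      then have "6 * real (t n) \<le> 5 * real D" by simp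
      then have tl: "real (t n) + real D / 2 \<le> real N" using ND by linarith
      then have "t n \<le> N" using D2 by linarith
      then have "real (N - t n) = real N - real (t n)" by (simp add: of_nat_diff)
      then show ?thesis using fac1[OF D2(2) tl] unfolding q_def by simp
    qed
    have q0: "q \<ge> 0" unfolding q_def using D2 by (simp add: field_simps)
    have "(\<Prod>n<g*k. real N * q ^ t n) \<le> (\<Prod>n<g*k. real (N - t n))"
    proof (rule prod_mono)
      fix n assume "n \<in> {..<g*k}"
      then have n: "n < g * k" by simp
      have "0 \<le> real N * q ^ t n" using q0 N0 by simp
      then show "0 \<le> real N * q ^ t n \<and> real N * q ^ t n \<le> real (N - t n)" using fac[OF n] by simp
    qed
    moreover have "(\<Prod>n<g*k. real N * q ^ t n) = real N ^ (g * k) * q ^ ((g choose 2) * (k choose 2))"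
    proof -
      have "(\<Prod>n<g*k. real N * q ^ t n) = (\<Prod>n<g*k. real N) * (\<Prod>n<g*k. q ^ t n)"
        by (rule prod.distrib)
      also have "(\<Prod>n<g*k. real N) = real N ^ (g * k)" by simp
      also have "(\<Prod>n<g*k. q ^ t n) = q ^ (\<Sum>n<g*k. t n)" by (rule power_sum[symmetric])
      also have "(\<Sum>n<g*k. t n) = (g choose 2) * (k choose 2)" using sum_t[OF k0] unfolding t_def .
      finally show ?thesis .
    qed
    moreover have "real (\<Prod>n<g*k. (N - t n)) = (\<Prod>n<g*k. real (N - t n))" by (rule of_nat_prod)
    ultimately have "real N ^ (g * k) * q ^ ((g choose 2) * (k choose 2)) \<le> real (N_N g k m Z) * (fact g * fact k)"
      using c1 by linarith
    then have X: "real N ^ (g * k) * q ^ ((g choose 2) * (k choose 2)) / (fact g * fact k) \<le> real (N_N g k m Z)" by (rule main)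
    show ?thesis unfolding if_P[OF True] rN[symmetric] q_def[symmetric] using X .
  next
    case False
    then have pII: "2 / (3 * real N) \<le> II" using pN hyp by simp
    define s where "s = real g * real k - real g - real k"
    have s_ab: "s = real (a * b + a + b)" unfolding s_def ga kb by (simp add: algebra_simps)
    have "a + b \<le> a * b + a + b" by simp
    then have s1n: "1 \<le> a * b + a + b" by (rule le_trans[OF ab])
    have s1: "s \<ge> 1" unfolding s_ab using s1n by (metis of_nat_1 of_nat_le_iff)
    have Ts: "real T = s + 1" unfolding T_def s_ab ga kb by (simp add: algebra_simps)
    have "2 / (3 * real N) \<le> 27 / (256 * s)" using pII unfolding II_def s_def .
    then have "512 * s \<le> 81 * real N" using N0 s1 by (simp add: field_simps)
    then have Ns: "4 * s \<le> real N" using s1 by linarith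
    define c where "c = 1 - (s + 1) / (4 * s)"
    have c0: "c \<ge> 0" unfolding c_def using s1 by (simp add: field_simps)
    have fac: "real N * c \<le> real (N - t n)" if "n < g * k" for n
    proof -
      have tl: "real (t n) \<le> s + 1" unfolding Ts[symmetric] using tT[OF that] by (simp only: of_nat_le_iff)
      then have "t n \<le> N" using Ns s1 by linarith
      then have e: "real (N - t n) = real N - real (t n)" by (simp add: of_nat_diff)
      have r: "real N / (4 * s) \<ge> 1" using Ns s1 by (simp add: field_simps)
      have "1 * (s + 1) \<le> (real N / (4 * s)) * (s + 1)" by (rule mult_right_mono[OF r]) (use s1 in simp)
      then have "s + 1 \<le> real N * (s + 1) / (4 * s)" by simp
      then have "real N * c \<le> real N - (s + 1)" unfolding c_def by (simp add: algebra_simps)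
      then show ?thesis using e tl by linarith
    qed
    have "(\<Prod>n<g*k. real N * c) \<le> (\<Prod>n<g*k. real (N - t n))"
    proof (rule prod_mono)
      fix n assume "n \<in> {..<g*k}"
      then have n: "n < g * k" by simp
      have "0 \<le> real N * c" using c0 N0 by simp
      then show "0 \<le> real N * c \<and> real N * c \<le> real (N - t n)" using fac[OF n] by simp
    qed
    moreover have "(\<Prod>n<g*k. real N * c) = real N ^ (g * k) * c ^ (g * k)"
      by (simp add: power_mult_distrib)
    moreover have "real (\<Prod>n<g*k. (N - t n)) = (\<Prod>n<g*k. real (N - t n))" by (rule of_nat_prod)
    ultimately have "real N ^ (g * k) * c ^ (g * k) \<le> real (N_N g k m Z) * (fact g * fact k)"
      using c1 by linarith
    then have X: "real N ^ (g * k) * c ^ (g * k) / (fact g * fact k) \<le> real (N_N g k m Z)" by (rule main)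
    have ceq: "1 - (real g * real k - real g - real k + 1) / (4 * (real g * real k - real g - real k)) = c"
      unfolding c_def s_def by simp
    show ?thesis unfolding if_not_P[OF False] rN[symmetric] ceq using X .
  qed
qed

end
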